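(* Let $T$ be a non-star tree and $x$ a vertex of $T$ with neighbors $x_1,\dots,x_n$, $n>2$. Suppose that for $i=1,\dots,m$, where $2\le m<n$, the tree $T_{(x_i,x)}$ is a neighbor $F$-tree of $x$. Let $T'$ be the connected component containing $x$ in $T-\{xx_i: i=1,\dots,m\}$. Suppose there exists a $(T',z)$-good 2-placement $\sigma$ with $dist(x,\sigma(x))\le 2$, where $z$ is a vertex of $T'$ (possibly $z=x$). Then there exists a $(T,z)$-good 2-placement $\sigma_z$ such that $\sigma_z(v)=\sigma(v)$ for every $v\in V(T')$ and $dist_T(x_i,\sigma_z(x_i))\le 2$ for $i=1,\dots,m$.
   Context: All graphs are finite, simple and undirected. A non-star tree is a tree not isomorphic to a star $K_{1,m}$ for any $m\ge0$. For an edge $ab$ of a tree $T$, $T_{(a,b)}$ denotes the connected component containing $a$ in $T-\{ab\}$; it is a neighbor $F$-tree of $b$ if it is a path with at most $3$ vertices and, when it has exactly $3$ vertices, $a$ is an end vertex of it. For a tree $S$, a permutation $\sigma$ of $V(S)$ is a 2-placement of $S$ if $\sigma(a)\sigma(b)\notin E(S)$ for every edge $ab\in E(S)$; $\sigma(S)\subseteq S^k$ means $dist_S(\sigma(a),\sigma(b))\le k$ for every edge $ab$ of $S$. For a non-star tree $S$ and vertex $w$, a fixed-point-free permutation $\sigma$ of $V(S)$ is an $(S,w)$-good 2-placement if (distances and degrees taken in $S$): (1) $\sigma$ is a 2-placement of $S$; (2) $\sigma(S)\subseteq S^5$; (3) $dist(w,\sigma(w))=1$; (4) $dist(y,\sigma(y))\le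 2$ for every neighbor $y$ of $w$; (5) $dist(y,\sigma(y))\le 4$ for every $y$ of degree $1$. *)

theory Defs
  imports "HOL-Combinatorics.Permutations"
begin

definition simple_graph :: "'a set \<Rightarrow> 'a set set \<Rightarrow> bool" where
  "simple_graph V E \<longleftrightarrow> finite V \<and> (\<forall>e\<in>E. \<exists>a b. e = {a, b} \<and> a \<noteq> b \<and> a \<in> V \<and> b \<in> V)"

definition is_walk :: "'a set \<Rightarrow> 'a set set \<Rightarrow> 'a list \<Rightarrow> bool" where
  "is_walk V E xs \<longleftrightarrow> xs \<noteq> [] \<and> set xs \<subseteq> V \<and>
     (\<forall>i. Suc i < length xs \<longrightarrow> {xs ! i, xs ! Suc i} \<in> E)"

definition connected_graph :: "'a set \<Rightarrow> 'a set set \<Rightarrow> bool" where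
  "connected_graph V E \<longleftrightarrow> V \<noteq> {} \<and>
     (\<forall>u\<in>V. \<forall>v\<in>V. \<exists>xs. is_walk V E xs \<and> hd xs = u \<and> last xs = v)"

definition has_cycle :: "'a set \<Rightarrow> 'a set set \<Rightarrow> bool" where
  "has_cycle V E \<longleftrightarrow> (\<exists>xs. is_walk V E xs \<and> distinct xs \<and> length xs \<ge> 3 \<and> {last xs, hd xs} \<in> E)"

definition is_tree :: "'a set \<Rightarrow> 'a set set \<Rightarrow> bool" where
  "is_tree V E \<longleftrightarrow> simple_graph V E \<and> connected_graph V E \<and> \<not> has_cycle V E"

text \<open>A star K_{1,m} (m \<ge> 0): some centre vertex adjacent to all other vertices
  (for a tree this forces the edge set to be exactly the edges at the centre).\<close>
definition is_star :: "'a set \<Rightarrow> 'a set set \<Rightarrow> bool" where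
  "is_star V E \<longleftrightarrow> is_tree V E \<and> (\<exists>c\<in>V. \<forall>v\<in>V. v \<noteq> c \<longrightarrow> {c, v} \<in> E)"

definition non_star_tree :: "'a set \<Rightarrow> 'a set set \<Rightarrow> bool" where
  "non_star_tree V E \<longleftrightarrow> is_tree V E \<and> \<not> is_star V E"

definition gdist :: "'a set \<Rightarrow> 'a set set \<Rightarrow> 'a \<Rightarrow> 'a \<Rightarrow> nat" where
  "gdist V E u v = (LEAST n. \<exists>xs. is_walk V E xs \<and> hd xs = u \<and> last xs = v \<and> length xs = Suc n)"

definition degree :: "'a set \<Rightarrow> 'a set set \<Rightarrow> 'a \<Rightarrow> nat" where
  "degree V E v = card {u \<in> V. {v, u} \<in> E}"

definition comp :: "'a set \<Rightarrow> 'a set set \<Rightarrow> 'a \<Rightarrow> 'a set" where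
  "comp V E a = {v \<in> V. \<exists>xs. is_walk V E xs \<and> hd xs = a \<and> last xs = v}"

definition induced :: "'a set set \<Rightarrow> 'a set \<Rightarrow> 'a set set" where
  "induced E W = {e \<in> E. e \<subseteq> W}"

text \<open>T_(a,b): component containing a in T - {ab}.\<close>
definition branch_V :: "'a set \<Rightarrow> 'a set set \<Rightarrow> 'a \<Rightarrow> 'a \<Rightarrow> 'a set" where
  "branch_V V E a b = comp V (E - {{a, b}}) a"

definition branch_E :: "'a set \<Rightarrow> 'a set set \<Rightarrow> 'a \<Rightarrow> 'a \<Rightarrow> 'a set set" where
  "branch_E V E a b = induced (E - {{a, b}}) (branch_V V E a b)"

definition path_graph_seq :: "'a set \<Rightarrow> 'a set set \<Rightarrow> 'a list \<Rightarrow> bool" where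
  "path_graph_seq W F xs \<longleftrightarrow> xs \<noteq> [] \<and> distinct xs \<and> set xs = W \<and>
     F = {{xs ! i, xs ! Suc i} | i. Suc i < length xs}"

definition nbr_F_tree :: "'a set \<Rightarrow> 'a set set \<Rightarrow> 'a \<Rightarrow> 'a \<Rightarrow> bool" where
  "nbr_F_tree V E a b \<longleftrightarrow> {a, b} \<in> E \<and>
     (\<exists>xs. path_graph_seq (branch_V V E a b) (branch_E V E a b) xs \<and> length xs \<le> 3 \<and>
        (length xs = 3 \<longrightarrow> a = hd xs \<or> a = last xs))"

definition two_placement :: "'a set \<Rightarrow> 'a set set \<Rightarrow> ('a \<Rightarrow> 'a) \<Rightarrow> bool" where
  "two_placement V E \<sigma> \<longleftrightarrow> \<sigma> permutes V \<and> (\<forall>a b. {a, b} \<in> E \<longrightarrow> {\<sigma> a, \<sigma> b} \<notin> E)"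

definition good_placement :: "'a set \<Rightarrow> 'a set set \<Rightarrow> 'a \<Rightarrow> ('a \<Rightarrow> 'a) \<Rightarrow> bool" where
  "good_placement V E w \<sigma> \<longleftrightarrow>
     non_star_tree V E \<and> w \<in> V \<and> \<sigma> permutes V \<and> (\<forall>v\<in>V. \<sigma> v \<noteq> v) \<and>
     two_placement V E \<sigma> \<and>
     (\<forall>a b. {a, b} \<in> E \<longrightarrow> gdist V E (\<sigma> a) (\<sigma> b) \<le> 5) \<and>
     gdist V E w (\<sigma> w) = 1 \<and>
     (\<forall>y\<in>V. {w, y} \<in> E \<longrightarrow> gdist V E y (\<sigma> y) \<le> 2) \<and>
     (\<forall>y\<in>V. degree V E y = 1 \<longrightarrow> gdist V E y (\<sigma> y) \<le> 4)"

end

theory Submission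
  imports Defs "HOL-Combinatorics.Cycles"
begin


lemma walk_Cons2: "is_walk V E (u # v # xs) \<longleftrightarrow> {u,v} \<in> E \<and> u \<in> V \<and> is_walk V E (v # xs)"
proof
  assume h: "is_walk V E (u # v # xs)"
  then show "{u,v} \<in> E \<and> u \<in> V \<and> is_walk V E (v # xs)"
  proof (intro conjI)
    show "{u,v} \<in> E" using h unfolding is_walk_def by force
    show "u \<in> V" using h unfolding is_walk_def by force
    show "is_walk V E (v # xs)" unfolding is_walk_def
    proof (intro conjI allI impI)
      fix i assume "Suc i < length (v # xs)"
      then have "Suc (Suc i) < length (u # v # xs)" by simp
      then have "{(u # v # xs) ! Suc i, (u # v # xs) ! Suc (Suc i)} \<in> E"
        using h unfolding is_walk_def by blast
      then show "{(v # xs) ! i, (v # xs) ! Suc i} \<in> E" by simp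
    qed (use h in \<open>auto simp: is_walk_def\<close>)
  qed
next
  assume h: "{u,v} \<in> E \<and> u \<in> V \<and> is_walk V E (v # xs)"
  show "is_walk V E (u # v # xs)" unfolding is_walk_def
  proof (intro conjI allI impI)
    fix i assume "Suc i < length (u # v # xs)"
    then show "{(u # v # xs) ! i, (u # v # xs) ! Suc i} \<in> E"
      using h unfolding is_walk_def by (cases i) auto
  qed (use h in \<open>auto simp: is_walk_def\<close>)
qed

lemma walk_single: "v \<in> V \<Longrightarrow> is_walk V E [v]"
  by (auto simp: is_walk_def)

lemma walk_ne: "is_walk V E xs \<Longrightarrow> xs \<noteq> []"
  by (simp add: is_walk_def)

lemma walk_Cons1: "is_walk V E (u # xs) \<Longrightarrow> xs \<noteq> [] \<Longrightarrow> is_walk V E xs \<and> {u, hd xs} \<in> E"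
  by (cases xs) (auto simp: walk_Cons2)

lemma walk_append: "is_walk V E xs \<Longrightarrow> is_walk V E ys \<Longrightarrow> last xs = hd ys \<Longrightarrow> is_walk V E (xs @ tl ys)"
proof (induction xs)
  case Nil then show ?case by (simp add: is_walk_def)
next
  case (Cons a xs)
  show ?case
  proof (cases xs)
    case Nil
    then show ?thesis using Cons walk_ne[of V E ys] by (cases ys) auto
  next
    case (Cons b zs)
    with Cons.prems Cons.IH show ?thesis by (auto simp: walk_Cons2)
  qed
qed

lemma walk_rev: "is_walk V E xs \<Longrightarrow> is_walk V E (rev xs)"
proof (induction xs)
  case Nil then show ?case by (simp add: is_walk_def)
next
  case (Cons a xs)
  show ?case
  proof (cases xs)
    case Nil then show ?thesis using Cons by simp
  next
    case (Cons b zs)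
    have w: "is_walk V E xs" and e: "{b,a} \<in> E" and aV: "a \<in> V"
      using Cons \<open>is_walk V E (a # xs)\<close> by (auto simp: walk_Cons2 insert_commute)
    have bV: "b \<in> V" using w Cons by (auto simp: is_walk_def)
    have "is_walk V E [b, a]" using e aV bV by (simp add: walk_Cons2 walk_single)
    then have "is_walk V E (rev xs @ tl [b,a])"
      by (rule walk_append[OF Cons.IH[OF w]]) (simp add: Cons)
    then show ?thesis by simp
  qed
qed

lemma walk_mono: "is_walk V E xs \<Longrightarrow> V \<subseteq> V2 \<Longrightarrow> E \<subseteq> E2 \<Longrightarrow> is_walk V2 E2 xs"
  by (auto simp: is_walk_def)

lemma walk_take: "is_walk V E xs \<Longrightarrow> i < length xs \<Longrightarrow> is_walk V E (take (Suc i) xs)"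
  unfolding is_walk_def
proof (intro conjI allI impI)
  assume h: "xs \<noteq> [] \<and> set xs \<subseteq> V \<and> (\<forall>i. Suc i < length xs \<longrightarrow> {xs ! i, xs ! Suc i} \<in> E)" "i < length xs"
  show "take (Suc i) xs \<noteq> []" using h by simp
  show "set (take (Suc i) xs) \<subseteq> V" using h set_take_subset by fastforce
  fix j assume "Suc j < length (take (Suc i) xs)"
  then show "{take (Suc i) xs ! j, take (Suc i) xs ! Suc j} \<in> E" using h by simp
qed

lemma walk_restrict: "is_walk V F xs \<Longrightarrow> x \<notin> set xs \<Longrightarrow> (\<forall>e\<in>F. x \<notin> e \<longrightarrow> e \<in> G)
   \<Longrightarrow> is_walk V G xs"
proof -
  assume h: "is_walk V F xs" "x \<notin> set xs" "\<forall>e\<in>F. x \<notin> e \<longrightarrow> e \<in> G"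
  show ?thesis unfolding is_walk_def
  proof (intro conjI allI impI)
    fix i assume i: "Suc i < length xs"
    then have "xs ! i \<in> set xs" "xs ! Suc i \<in> set xs" by auto
    then have 1: "x \<notin> {xs ! i, xs ! Suc i}" using h(2) by auto
    have 2: "{xs ! i, xs ! Suc i} \<in> F" using h(1) i by (simp add: is_walk_def)
    show "{xs ! i, xs ! Suc i} \<in> G" using h(3)[rule_format, OF 2 1] .
  qed (use h(1) in \<open>simp_all add: is_walk_def\<close>)
qed

lemma gd_le: "is_walk V E xs \<Longrightarrow> hd xs = u \<Longrightarrow> last xs = v \<Longrightarrow> gdist V E u v \<le> length xs - 1"
proof -
  assume h: "is_walk V E xs" "hd xs = u" "last xs = v"
  then have "length xs = Suc (length xs - 1)" using walk_ne[OF h(1)] by (cases xs) auto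
  then show ?thesis unfolding gdist_def using h by (intro Least_le) metis
qed

lemma gd_ex: "is_walk V E xs \<Longrightarrow> hd xs = u \<Longrightarrow> last xs = v \<Longrightarrow>
   \<exists>ys. is_walk V E ys \<and> hd ys = u \<and> last ys = v \<and> length ys = Suc (gdist V E u v)"
proof -
  assume h: "is_walk V E xs" "hd xs = u" "last xs = v"
  then have "length xs = Suc (length xs - 1)" using walk_ne[OF h(1)] by (cases xs) auto
  then have "\<exists>n. \<exists>ys. is_walk V E ys \<and> hd ys = u \<and> last ys = v \<and> length ys = Suc n" using h by metis
  then show ?thesis unfolding gdist_def by (rule LeastI_ex)
qed

lemma conn_walk: "connected_graph V E \<Longrightarrow> u \<in> V \<Longrightarrow> v \<in> V \<Longrightarrow> \<exists>xs. is_walk V E xs \<and> hd xs = u \<and> last xs = v"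
  by (simp add: connected_graph_def)

lemma gd_tri: assumes "connected_graph V E" "u \<in> V" "v \<in> V" "w \<in> V"
  shows "gdist V E u w \<le> gdist V E u v + gdist V E v w"
proof -
  obtain p0 where "is_walk V E p0" "hd p0 = u" "last p0 = v" using conn_walk assms by metis
  then obtain p where p: "is_walk V E p" "hd p = u" "last p = v" "length p = Suc (gdist V E u v)"
    using gd_ex by metis
  obtain q0 where "is_walk V E q0" "hd q0 = v" "last q0 = w" using conn_walk assms by metis
  then obtain q where q: "is_walk V E q" "hd q = v" "last q = w" "length q = Suc (gdist V E v w)"
    using gd_ex by metis
  have W: "is_walk V E (p @ tl q)" using walk_append p q by metis
  have "hd (p @ tl q) = u" using p walk_ne by (cases p) auto
  moreover have "last (p @ tl q) = w" using p q walk_ne[of V E q]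
    by (cases q) (auto)
  ultimately have "gdist V E u w \<le> length (p @ tl q) - 1" using gd_le W by metis
  then show ?thesis using p q by simp
qed

lemma gd_sym_le: assumes "is_walk V E xs" "hd xs = u" "last xs = v"
  shows "gdist V E v u \<le> gdist V E u v"
proof -
  obtain p where p: "is_walk V E p" "hd p = u" "last p = v" "length p = Suc (gdist V E u v)"
    using gd_ex assms by metis
  have "gdist V E v u \<le> length (rev p) - 1"
    using gd_le[OF walk_rev[OF p(1)]] p walk_ne[OF p(1)] by (simp add: hd_rev last_rev)
  then show ?thesis using p by simp
qed

lemma gd_sym: assumes "connected_graph V E" "u \<in> V" "v \<in> V"
  shows "gdist V E v u = gdist V E u v"
  using gd_sym_le conn_walk assms by (metis antisym)

lemma gd_edge: "{u,v} \<in> E \<Longrightarrow> u \<in> V \<Longrightarrow> v \<in> V \<Longrightarrow> gdist V E u v \<le> 1"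
  using gd_le[of V E "[u,v]" u v] by (simp add: walk_Cons2 walk_single)

lemma gd_refl: "u \<in> V \<Longrightarrow> gdist V E u u = 0"
  using gd_le[of V E "[u]" u u] by (simp add: walk_single)

lemma gd_zero: "is_walk V E xs \<Longrightarrow> hd xs = u \<Longrightarrow> last xs = v \<Longrightarrow> gdist V E u v = 0 \<Longrightarrow> u = v"
proof -
  assume h: "is_walk V E xs" "hd xs = u" "last xs = v" "gdist V E u v = 0"
  then obtain ys where ys: "hd ys = u" "last ys = v" "length ys = Suc 0" using gd_ex by metis
  then obtain w where "ys = [w]" by (cases ys) auto
  then show ?thesis using ys by simp
qed

lemma gd_mono: "V1 \<subseteq> V \<Longrightarrow> E1 \<subseteq> E \<Longrightarrow> is_walk V1 E1 xs \<Longrightarrow> hd xs = u \<Longrightarrow> last xs = v \<Longrightarrow>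
   gdist V E u v \<le> gdist V1 E1 u v"
proof -
  assume h: "V1 \<subseteq> V" "E1 \<subseteq> E" "is_walk V1 E1 xs" "hd xs = u" "last xs = v"
  then obtain ys where ys: "is_walk V1 E1 ys" "hd ys = u" "last ys = v" "length ys = Suc (gdist V1 E1 u v)"
    using gd_ex by metis
  have "is_walk V E ys" using walk_mono ys h by metis
  then have "gdist V E u v \<le> length ys - 1" using gd_le ys by metis
  then show ?thesis using ys by simp
qed

lemma sg_edge: "simple_graph V E \<Longrightarrow> {u,v} \<in> E \<Longrightarrow> u \<in> V \<and> v \<in> V \<and> u \<noteq> v"
proof -
  assume h: "simple_graph V E" "{u,v} \<in> E"
  then obtain a b where ab: "{u,v} = {a,b}" "a \<noteq> b" "a \<in> V" "b \<in> V"
    unfolding simple_graph_def by blast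
  then show ?thesis by (auto simp: doubleton_eq_iff)
qed

lemma compI: "is_walk V F xs \<Longrightarrow> hd xs = a \<Longrightarrow> last xs = v \<Longrightarrow> v \<in> comp V F a"
proof -
  assume h: "is_walk V F xs" "hd xs = a" "last xs = v"
  have "last xs \<in> set xs" using walk_ne[OF h(1)] by simp
  then have "v \<in> V" using h unfolding is_walk_def by blast
  then show ?thesis unfolding comp_def using h by blast
qed

lemma compE: "v \<in> comp V F a \<Longrightarrow> \<exists>xs. is_walk V F xs \<and> hd xs = a \<and> last xs = v"
  unfolding comp_def by blast

lemma walk_hd_last: "is_walk V F xs \<Longrightarrow> hd xs \<in> V \<and> last xs \<in> V"
proof -
  assume h: "is_walk V F xs"
  have "hd xs \<in> set xs" "last xs \<in> set xs" using walk_ne[OF h] by simp_all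
  then show ?thesis using h unfolding is_walk_def by blast
qed

lemma walk_app_hd: "xs \<noteq> [] \<Longrightarrow> hd (xs @ ys) = hd xs" by (cases xs) auto

lemma walk_app_last: "is_walk V F ys \<Longrightarrow> last xs = hd ys \<Longrightarrow> xs \<noteq> [] \<Longrightarrow> last (xs @ tl ys) = last ys"
proof -
  assume h: "is_walk V F ys" "last xs = hd ys" "xs \<noteq> []"
  obtain y ys' where ys: "ys = y # ys'" using walk_ne[OF h(1)] by (cases ys) auto
  show ?thesis using h ys by (cases ys') auto
qed

lemma comp_trans: "v \<in> comp V F a \<Longrightarrow> w \<in> comp V F v \<Longrightarrow> w \<in> comp V F a"
proof -
  assume "v \<in> comp V F a" "w \<in> comp V F v"
  then obtain xs ys where xs: "is_walk V F xs" "hd xs = a" "last xs = v"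
    and ys: "is_walk V F ys" "hd ys = v" "last ys = w" using compE by metis
  have W: "is_walk V F (xs @ tl ys)" using walk_append xs ys by metis
  have "hd (xs @ tl ys) = a" using xs walk_ne[OF xs(1)] walk_app_hd by metis
  moreover have "last (xs @ tl ys) = w" using walk_app_last[OF ys(1)] xs ys walk_ne[OF xs(1)] by metis
  ultimately show ?thesis using W compI by metis
qed

lemma comp_closed: "v \<in> comp V F a \<Longrightarrow> {v,w} \<in> F \<Longrightarrow> w \<in> V \<Longrightarrow> w \<in> comp V F a"
proof -
  assume h: "v \<in> comp V F a" "{v,w} \<in> F" "w \<in> V"
  have "v \<in> V" using h(1) by (simp add: comp_def)
  then have "is_walk V F [v,w]" using h by (simp add: walk_Cons2 walk_single)
  then have "w \<in> comp V F v" using compI[of V F "[v,w]"] by simp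
  then show ?thesis using comp_trans h(1) by metis
qed

lemma comp_sym: "v \<in> comp V F a \<Longrightarrow> a \<in> comp V F v"
proof -
  assume "v \<in> comp V F a"
  then obtain xs where xs: "is_walk V F xs" "hd xs = a" "last xs = v" using compE by metis
  have "hd (rev xs) = v" "last (rev xs) = a" using xs walk_ne[OF xs(1)] by (simp_all add: hd_rev last_rev)
  then show ?thesis using compI walk_rev[OF xs(1)] by metis
qed

lemma comp_self: "a \<in> V \<Longrightarrow> a \<in> comp V F a"
  using compI[of V F "[a]" a a] walk_single[of a V F] by simp

lemma comp_sub: "comp V F a \<subseteq> V"
  by (auto simp: comp_def)

lemma comp_mono: "F \<subseteq> G \<Longrightarrow> comp V F a \<subseteq> comp V G a"
proof
  fix v assume "F \<subseteq> G" "v \<in> comp V F a"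
  then obtain xs where xs: "is_walk V F xs" "hd xs = a" "last xs = v" using compE by metis
  then have "is_walk V G xs" using walk_mono \<open>F \<subseteq> G\<close> by blast
  then show "v \<in> comp V G a" using compI xs by metis
qed

lemma comp_walk_vertices: assumes "is_walk V F xs" "hd xs = a" shows "set xs \<subseteq> comp V F a"
proof
  fix v assume "v \<in> set xs"
  then obtain i where i: "i < length xs" "xs ! i = v" by (metis in_set_conv_nth)
  have W: "is_walk V F (take (Suc i) xs)" using walk_take assms i by metis
  moreover have "hd (take (Suc i) xs) = a" using assms i by (cases xs) auto
  moreover have "last (take (Suc i) xs) = v" using i by (simp add: take_Suc_conv_app_nth)
  ultimately show "v \<in> comp V F a" using compI by metis
qed

lemma walk_closed_set: assumes "is_walk V E xs" "hd xs \<in> S" "\<And>u w. u \<in> S \<Longrightarrow> {u,w} \<in> E \<Longrightarrow> w \<in> S"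
  shows "set xs \<subseteq> S"
proof -
  have "i < length xs \<longrightarrow> xs ! i \<in> S" for i
  proof (induction i)
    case 0 then show ?case using assms(2) walk_ne[OF assms(1)] by (simp add: hd_conv_nth)
  next
    case (Suc i)
    show ?case
    proof
      assume i: "Suc i < length xs"
      then have "xs ! i \<in> S" using Suc by simp
      moreover have "{xs ! i, xs ! Suc i} \<in> E" using assms(1) i by (simp add: is_walk_def)
      ultimately show "xs ! Suc i \<in> S" using assms(3) by metis
    qed
  qed
  then show ?thesis by (metis in_set_conv_nth subsetI)
qed

lemma derangement_ex: assumes "finite X" "2 \<le> card X"
  shows "\<exists>r. r permutes X \<and> (\<forall>c\<in>X. r c \<noteq> c)"
proof -
  obtain xs where xs: "set xs = X" "distinct xs" using finite_distinct_list[OF assms(1)] by blast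
  have len: "length xs = card X" using distinct_card[OF xs(2)] xs(1) by simp
  define r where "r = cycle_of_list xs"
  have "map r xs = rotate 1 xs" using cyclic_rotation[OF xs(2), of 1] by (simp add: r_def)
  have "r c \<noteq> c" if "c \<in> X" for c
  proof -
    have "c \<in> set xs" using that xs(1) by simp
    then obtain i where i: "i < length xs" "xs ! i = c" by (auto simp: in_set_conv_nth)
    have "r c = map r xs ! i" using i by simp
    also have "\<dots> = rotate 1 xs ! i" using \<open>map r xs = _\<close> by simp
    finally have "r c = rotate 1 xs ! i" .
    also have "\<dots> = xs ! ((1 + i) mod length xs)" using i by (simp add: nth_rotate1)
    finally have rc: "r c = xs ! ((1 + i) mod length xs)" .
    have n2: "2 \<le> length xs" using len assms by simp
    have ne: "(1 + i) mod length xs \<noteq> i"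
    proof (cases "Suc i < length xs")
      case True then show ?thesis by simp
    next
      case False
      then have "Suc i = length xs" using i by simp
      then show ?thesis using n2 by simp
    qed
    have lt: "(1 + i) mod length xs < length xs" using i(1) by (intro mod_less_divisor) linarith
    have "xs ! ((1 + i) mod length xs) \<noteq> xs ! i"
      using nth_eq_iff_index_eq[OF xs(2) lt i(1)] ne by simp
    then show ?thesis using rc i(2) by simp
  qed
  moreover have "r permutes X" using cycle_permutes[of xs] xs(1) by (simp add: r_def)
  ultimately show ?thesis by blast
qed




lemma pe2: "{{[p,q] ! i, [p,q] ! Suc i} | i. Suc i < length [p,q]} = {{p,q}}"
proof -
  have "{i. Suc i < length [p,q]} = {0}" by auto
  then show ?thesis by auto
qed

lemma pe3: "{{[p,q,r] ! i, [p,q,r] ! Suc i} | i. Suc i < length [p,q,r]} = {{p,q},{q,r}}"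
proof -
  have i: "Suc i < length [p,q,r] \<longleftrightarrow> i = 0 \<or> i = 1" for i by auto
  show ?thesis
  proof (rule set_eqI)
    fix e show "e \<in> {{[p,q,r] ! i, [p,q,r] ! Suc i} | i. Suc i < length [p,q,r]} \<longleftrightarrow> e \<in> {{p,q},{q,r}}"
    proof
      assume "e \<in> {{[p,q,r] ! i, [p,q,r] ! Suc i} | i. Suc i < length [p,q,r]}"
      then obtain i where "e = {[p,q,r] ! i, [p,q,r] ! Suc i}" "i = 0 \<or> i = 1" using i by blast
      then show "e \<in> {{p,q},{q,r}}" by auto
    next
      assume "e \<in> {{p,q},{q,r}}"
      then have "e = {[p,q,r] ! 0, [p,q,r] ! Suc 0} \<or> e = {[p,q,r] ! 1, [p,q,r] ! Suc 1}" by auto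
      moreover have "Suc 0 < length [p,q,r]" "Suc 1 < length [p,q,r]" by simp_all
      ultimately show "e \<in> {{[p,q,r] ! i, [p,q,r] ! Suc i} | i. Suc i < length [p,q,r]}" by blast
    qed
  qed
qed

locale S =
  fixes V :: "'a set" and E :: "'a set set" and x z :: 'a and X V' :: "'a set" and E' :: "'a set set"
    and \<sigma> :: "'a \<Rightarrow> 'a"
  assumes ns: "non_star_tree V E"
    and xV: "x \<in> V"
    and deg: "card {y \<in> V. {x, y} \<in> E} > 2"
    and Xsub: "X \<subseteq> {y \<in> V. {x, y} \<in> E}"
    and cX: "2 \<le> card X"
    and Xnb: "\<forall>xi\<in>X. nbr_F_tree V E xi x"
    and V'def: "V' = comp V (E - {{x, xi} | xi. xi \<in> X}) x"
    and E'def: "E' = induced (E - {{x, xi} | xi. xi \<in> X}) V'"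
    and zV': "z \<in> V'"
    and gp: "good_placement V' E' z \<sigma>"
    and sx: "gdist V' E' x (\<sigma> x) \<le> 2"
begin

abbreviation "Fm \<equiv> E - {{x, xi} | xi. xi \<in> X}"
abbreviation "Bc c \<equiv> branch_V V E c x"

lemma sg: "simple_graph V E" using ns by (simp add: non_star_tree_def is_tree_def)
lemma cg: "connected_graph V E" using ns by (simp add: non_star_tree_def is_tree_def)
lemma finV: "finite V" using sg by (simp add: simple_graph_def)
lemma sgE: "{u,v} \<in> E \<Longrightarrow> u \<in> V \<and> v \<in> V \<and> u \<noteq> v" using sg_edge[OF sg] .

lemma XV: "c \<in> X \<Longrightarrow> c \<in> V \<and> {x,c} \<in> E \<and> c \<noteq> x"
proof -
  assume "c \<in> X"
  then have "c \<in> V" "{x,c} \<in> E" using Xsub by auto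
  then show ?thesis using sgE by blast
qed

lemma finX: "finite X" using Xsub finV finite_subset by fastforce

lemma Bc_def': "Bc c = comp V (E - {{c,x}}) c" by (simp add: branch_V_def)

lemma Bc_path: "c \<in> X \<Longrightarrow> \<exists>ys. path_graph_seq (Bc c) (branch_E V E c x) ys \<and> length ys \<le> 3 \<and>
        (length ys = 3 \<longrightarrow> c = hd ys \<or> c = last ys)"
  using Xnb unfolding nbr_F_tree_def by blast

lemma Bc_self: "c \<in> X \<Longrightarrow> c \<in> Bc c"
  using XV[of c] comp_self[of c V "E - {{c,x}}"] by (simp add: Bc_def')

lemma Bc_sub: "Bc c \<subseteq> V" by (simp add: branch_V_def comp_sub)

lemma Bc_card: assumes "c \<in> X" shows "finite (Bc c) \<and> card (Bc c) \<le> 3"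
proof -
  obtain ys where ys: "path_graph_seq (Bc c) (branch_E V E c x) ys" "length ys \<le> 3" using Bc_path assms by blast
  then have "Bc c = set ys" by (simp add: path_graph_seq_def)
  then show ?thesis using ys(2) card_length[of ys] by simp
qed

lemma x_notin_Bc: assumes "c \<in> X" shows "x \<notin> Bc c"
proof
  assume xB: "x \<in> Bc c"
  define N where "N = {y \<in> V. {x, y} \<in> E}"
  have "N \<subseteq> Bc c"
  proof
    fix y assume "y \<in> N"
    then have y: "y \<in> V" "{x,y} \<in> E" by (auto simp: N_def)
    show "y \<in> Bc c"
    proof (cases "y = c")
      case True then show ?thesis using Bc_self assms by simp
    next
      case False
      have "{x,y} \<noteq> {c,x}" using False sgE[OF y(2)] by (auto simp: doubleton_eq_iff)
      then have "{x,y} \<in> E - {{c,x}}" using y by simp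
      then show ?thesis using comp_closed[of x V "E - {{c,x}}" c y] xB y(1) by (simp add: Bc_def')
    qed
  qed
  moreover have "x \<notin> N" using sgE[of x x] by (auto simp: N_def)
  ultimately have sub: "insert x N \<subseteq> Bc c" using xB by blast
  have fN: "finite N" using finV by (simp add: N_def)
  have "card (insert x N) = Suc (card N)" using fN \<open>x \<notin> N\<close> by simp
  moreover have "card (insert x N) \<le> card (Bc c)" using sub Bc_card[OF assms] card_mono by metis
  ultimately show False using Bc_card[OF assms] deg N_def by simp
qed

lemma Fm_sub: "c \<in> X \<Longrightarrow> Fm \<subseteq> E - {{c,x}}"
  by (auto simp: insert_commute)

lemma x_V': "x \<in> V'" by (simp add: V'def comp_self xV)

lemma V'_sub: "V' \<subseteq> V" by (simp add: V'def comp_sub)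

lemma Bc_V'_disj: assumes "c \<in> X" "v \<in> Bc c" "v \<in> V'" shows False
proof -
  have "v \<in> comp V (E - {{c,x}}) x" using assms(3) V'def comp_mono[OF Fm_sub[OF assms(1)]] by blast
  then have "x \<in> comp V (E - {{c,x}}) v" by (rule comp_sym)
  moreover have "v \<in> comp V (E - {{c,x}}) c" using assms(2) by (simp add: Bc_def')
  ultimately have "x \<in> Bc c" using comp_trans[of v V "E - {{c,x}}" c x] by (simp add: Bc_def')
  then show False using x_notin_Bc assms(1) by simp
qed

lemma c_notin_V': "c \<in> X \<Longrightarrow> c \<notin> V'" using Bc_V'_disj[of c c] Bc_self[of c] by blast

lemma Bc_disj: assumes "c \<in> X" "c' \<in> X" "c \<noteq> c'" "v \<in> Bc c" "v \<in> Bc c'" shows False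
proof -
  have vc: "v \<in> comp V (E - {{c',x}}) c'" using assms(5) by (simp add: Bc_def')
  obtain ws where ws: "is_walk V (E - {{c',x}}) ws" "hd ws = c'" "last ws = v"
    using compE[OF vc] by blast
  have "set ws \<subseteq> Bc c'" using comp_walk_vertices[OF ws(1,2)] by (simp add: Bc_def')
  then have "x \<notin> set ws" using x_notin_Bc[OF assms(2)] by blast
  moreover have "\<forall>e\<in>E - {{c',x}}. x \<notin> e \<longrightarrow> e \<in> E - {{c,x}}" by auto
  ultimately have "is_walk V (E - {{c,x}}) ws" by (rule walk_restrict[OF ws(1)])
  then have "v \<in> comp V (E - {{c,x}}) c'" by (rule compI[OF _ ws(2,3)])
  then have "c' \<in> comp V (E - {{c,x}}) v" by (rule comp_sym)
  moreover have "v \<in> comp V (E - {{c,x}}) c" using assms(4) by (simp add: Bc_def')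
  ultimately have c'B: "c' \<in> Bc c" using comp_trans[of v V "E - {{c,x}}" c c'] by (simp add: Bc_def')
  have "{c',x} \<noteq> {c,x}" using assms(3) XV[OF assms(1)] XV[OF assms(2)] by (auto simp: doubleton_eq_iff)
  then have "{c',x} \<in> E - {{c,x}}" using XV[OF assms(2)] by (simp add: insert_commute)
  then have "x \<in> Bc c" using comp_closed[of c' V "E - {{c,x}}" c x] c'B xV by (simp add: Bc_def')
  then show False using x_notin_Bc assms(1) by simp
qed

lemma edge_Bc: assumes "c \<in> X" "u \<in> Bc c" "{u,w} \<in> E"
  shows "(w \<in> Bc c \<and> {u,w} \<noteq> {c,x}) \<or> (u = c \<and> w = x)"
proof (cases "{u,w} = {c,x}")
  case True
  then have "u = c \<or> u = x" by (auto simp: doubleton_eq_iff)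
  moreover have "u \<noteq> x" using x_notin_Bc[OF assms(1)] assms(2) by blast
  ultimately show ?thesis using True by (auto simp: doubleton_eq_iff)
next
  case False
  then have "{u,w} \<in> E - {{c,x}}" using assms by simp
  then have "w \<in> Bc c" using comp_closed[of u V "E - {{c,x}}" c w] assms(2) sgE[OF assms(3)] by (simp add: Bc_def')
  then show ?thesis using False by simp
qed

lemma edge_in_BE: assumes "c \<in> X" "u \<in> Bc c" "w \<in> Bc c" "{u,w} \<in> E"
  shows "{u,w} \<in> branch_E V E c x"
proof -
  have "{u,w} \<noteq> {c,x}" using x_notin_Bc[OF assms(1)] assms(2,3) by (auto simp: doubleton_eq_iff)
  then show ?thesis using assms by (simp add: branch_E_def induced_def)
qed

lemma BE_sub: "branch_E V E c x \<subseteq> E" by (auto simp: branch_E_def induced_def)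

lemma no_cross: assumes "c \<in> X" "c' \<in> X" "c \<noteq> c'" "u \<in> Bc c" "w \<in> Bc c'" shows "{u,w} \<notin> E"
proof
  assume e: "{u,w} \<in> E"
  show False using edge_Bc[OF assms(1,4) e]
  proof
    assume "w \<in> Bc c \<and> {u,w} \<noteq> {c,x}" then show False using Bc_disj[of c c' w] assms by blast
  next
    assume "u = c \<and> w = x" then show False using x_notin_Bc[OF assms(2)] assms(5) by blast
  qed
qed

lemma cover: assumes "v \<in> V" shows "v \<in> V' \<or> (\<exists>c\<in>X. v \<in> Bc c)"
proof -
  define Sx where "Sx = V' \<union> (\<Union>c\<in>X. Bc c)"
  have inV': "w \<in> Sx" if "w \<in> V'" for w using that by (simp add: Sx_def)
  have inB: "w \<in> Sx" if "c \<in> X" "w \<in> Bc c" for c w using that by (auto simp: Sx_def)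
  have outS: "\<exists>c\<in>X. u \<in> Bc c" if "u \<in> Sx" "u \<notin> V'" for u using that by (simp add: Sx_def)
  have cl: "w \<in> Sx" if u: "u \<in> Sx" and e: "{u,w} \<in> E" for u w
  proof (cases "u \<in> V'")
    case True
    show ?thesis
    proof (cases "{u,w} \<in> {{x, xi} | xi. xi \<in> X}")
      case True
      then obtain c where c: "c \<in> X" "{u,w} = {x,c}" by blast
      then have "w = x \<or> w = c" by (auto simp: doubleton_eq_iff)
      then show ?thesis
      proof
        assume "w = x" then show ?thesis using inV' x_V' by simp
      next
        assume "w = c" then show ?thesis using inB[OF c(1)] Bc_self[OF c(1)] by simp
      qed
    next
      case False
      then have "{u,w} \<in> Fm" using e by simp
      then have "w \<in> V'" using comp_closed[of u V Fm x w] \<open>u \<in> V'\<close> sgE[OF e] by (simp add: V'def)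
      then show ?thesis by (rule inV')
    qed
  next
    case False
    then obtain c where c: "c \<in> X" "u \<in> Bc c" using outS u by blast
    from edge_Bc[OF c e] show ?thesis
    proof
      assume "w \<in> Bc c \<and> {u,w} \<noteq> {c,x}" then show ?thesis using inB[OF c(1)] by simp
    next
      assume "u = c \<and> w = x" then show ?thesis using inV' x_V' by simp
    qed
  qed
  obtain ws where ws: "is_walk V E ws" "hd ws = x" "last ws = v" using conn_walk[OF cg xV assms] by blast
  have "hd ws \<in> Sx" using ws(2) inV' x_V' by simp
  then have "set ws \<subseteq> Sx" using walk_closed_set[OF ws(1), of Sx] cl by blast
  moreover have "v \<in> set ws" using ws(3) walk_ne[OF ws(1)] by auto
  ultimately have "v \<in> Sx" by blast
  then show ?thesis using outS by blast
qed

lemma E'_sub: "E' \<subseteq> E" using E'def by (auto simp: induced_def)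

lemma E'_edge: assumes "u \<in> V'" "w \<in> V'" "{u,w} \<in> E" shows "{u,w} \<in> E'"
proof -
  have "{u,w} \<notin> {{x, xi} | xi. xi \<in> X}"
  proof
    assume "{u,w} \<in> {{x, xi} | xi. xi \<in> X}"
    then obtain c where c: "c \<in> X" "{u,w} = {x,c}" by blast
    then have "c = u \<or> c = w" by (auto simp: doubleton_eq_iff)
    then show False using c_notin_V'[OF c(1)] assms by blast
  qed
  then show ?thesis using assms E'def by (simp add: induced_def)
qed

lemma deg_eq: assumes "y \<in> V'" "y \<noteq> x" shows "{u \<in> V. {y,u} \<in> E} = {u \<in> V'. {y,u} \<in> E'}"
proof (rule set_eqI)
  fix u
  show "u \<in> {u \<in> V. {y,u} \<in> E} \<longleftrightarrow> u \<in> {u \<in> V'. {y,u} \<in> E'}"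
  proof
    assume "u \<in> {u \<in> V. {y,u} \<in> E}"
    then have u: "u \<in> V" "{y,u} \<in> E" by auto
    have "{y,u} \<notin> {{x, xi} | xi. xi \<in> X}"
    proof
      assume "{y,u} \<in> {{x, xi} | xi. xi \<in> X}"
      then obtain c where c: "c \<in> X" "{y,u} = {x,c}" by blast
      then have "y = c" using assms(2) by (auto simp: doubleton_eq_iff)
      then show False using c_notin_V'[OF c(1)] assms(1) by blast
    qed
    then have "{y,u} \<in> Fm" using u by simp
    then have "u \<in> V'" using comp_closed[of y V Fm x u] assms(1) u(1) by (simp add: V'def)
    then show "u \<in> {u \<in> V'. {y,u} \<in> E'}" using E'_edge assms(1) u(2) by blast
  next
    assume "u \<in> {u \<in> V'. {y,u} \<in> E'}"
    then show "u \<in> {u \<in> V. {y,u} \<in> E}" using V'_sub E'_sub by blast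
  qed
qed

lemma gp': "non_star_tree V' E' \<and> \<sigma> permutes V' \<and> (\<forall>v\<in>V'. \<sigma> v \<noteq> v) \<and>
     two_placement V' E' \<sigma> \<and>
     (\<forall>a b. {a, b} \<in> E' \<longrightarrow> gdist V' E' (\<sigma> a) (\<sigma> b) \<le> 5) \<and>
     gdist V' E' z (\<sigma> z) = 1 \<and>
     (\<forall>y\<in>V'. {z, y} \<in> E' \<longrightarrow> gdist V' E' y (\<sigma> y) \<le> 2) \<and>
     (\<forall>y\<in>V'. degree V' E' y = 1 \<longrightarrow> gdist V' E' y (\<sigma> y) \<le> 4)"
  using gp by (simp add: good_placement_def)

lemma cg': "connected_graph V' E'" using gp' by (simp add: non_star_tree_def is_tree_def)

lemma gmono: assumes "u \<in> V'" "v \<in> V'" shows "gdist V E u v \<le> gdist V' E' u v"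
proof -
  obtain ws where "is_walk V' E' ws" "hd ws = u" "last ws = v" using conn_walk[OF cg' assms] by blast
  then show ?thesis using gd_mono[OF V'_sub E'_sub] by blast
qed

lemma shape: assumes "c \<in> X"
  shows "\<exists>p. Bc c = {c} \<or>
    (fst p \<noteq> c \<and> Bc c = {c, fst p} \<and> {c, fst p} \<in> E \<and> branch_E V E c x = {{c, fst p}}) \<or>
    (c \<noteq> fst p \<and> c \<noteq> snd p \<and> fst p \<noteq> snd p \<and> Bc c = {c, fst p, snd p} \<and> {c, fst p} \<in> E \<and>
       {fst p, snd p} \<in> E \<and> branch_E V E c x = {{c, fst p}, {fst p, snd p}})"
proof -
  obtain ys where ys: "path_graph_seq (Bc c) (branch_E V E c x) ys" "length ys \<le> 3"
     "length ys = 3 \<longrightarrow> c = hd ys \<or> c = last ys" using Bc_path assms by blast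
  have ne: "ys \<noteq> []" and d: "distinct ys" and st: "set ys = Bc c"
    and BE: "branch_E V E c x = {{ys ! i, ys ! Suc i} | i. Suc i < length ys}"
    using ys(1) by (auto simp: path_graph_seq_def)
  have cin: "c \<in> set ys" using st Bc_self assms by simp
  have BEE: "branch_E V E c x \<subseteq> E" by (rule BE_sub)
  have "(\<exists>p. ys = [p]) \<or> (\<exists>p q. ys = [p,q]) \<or> (\<exists>p q r. ys = [p,q,r])"
  proof (cases ys)
    case Nil then show ?thesis using ne by simp
  next
    case (Cons p t)
    show ?thesis
    proof (cases t)
      case Nil then show ?thesis using Cons by simp
    next
      case (Cons q t2)
      show ?thesis
      proof (cases t2)
        case Nil then show ?thesis using Cons \<open>ys = p # t\<close> by simp
      next
        case (Cons r t3)
        then have "t3 = []" using ys(2) \<open>ys = p # t\<close> \<open>t = q # t2\<close> by simp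
        then show ?thesis using Cons \<open>ys = p # t\<close> \<open>t = q # t2\<close> by simp
      qed
    qed
  qed
  then consider (1) p where "ys = [p]" | (2) p q where "ys = [p,q]" | (3) p q r where "ys = [p,q,r]"
    by blast
  then show ?thesis
  proof cases
    case 1
    then have "p = c" using cin by simp
    then have "Bc c = {c}" using st 1 by simp
    then show ?thesis by blast
  next
    case 2
    then have BE2: "branch_E V E c x = {{p,q}}" using BE pe2 by simp
    have pq: "p \<noteq> q" using d 2 by simp
    show ?thesis
    proof (cases "c = p")
      case True
      then show ?thesis using 2 BE2 BEE st pq by (intro exI[of _ "(q,q)"]) auto
    next
      case False
      then have "c = q" using cin 2 by simp
      then show ?thesis using 2 BE2 BEE st pq by (intro exI[of _ "(p,p)"]) (auto simp: insert_commute)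
    qed
  next
    case 3
    then have BE3: "branch_E V E c x = {{p,q},{q,r}}" using BE pe3 by simp
    have pqr: "p \<noteq> q" "q \<noteq> r" "p \<noteq> r" using d 3 by auto
    have "c = p \<or> c = r" using ys(3) 3 by simp
    then show ?thesis
    proof
      assume "c = p"
      then show ?thesis using 3 BE3 BEE st pqr by (intro exI[of _ "(q,r)"]) auto
    next
      assume "c = r"
      then show ?thesis using 3 BE3 BEE st pqr by (intro exI[of _ "(q,p)"]) (auto simp: insert_commute)
    qed
  qed
qed

end



locale S2 = S +
  fixes A Bv r :: "'a \<Rightarrow> 'a"
  assumes shp: "\<forall>c\<in>X. Bc c = {c} \<or>
    (A c \<noteq> c \<and> Bc c = {c, A c} \<and> {c, A c} \<in> E \<and> branch_E V E c x = {{c, A c}}) \<or>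
    (c \<noteq> A c \<and> c \<noteq> Bv c \<and> A c \<noteq> Bv c \<and> Bc c = {c, A c, Bv c} \<and> {c, A c} \<in> E \<and>
       {A c, Bv c} \<in> E \<and> branch_E V E c x = {{c, A c}, {A c, Bv c}})"
    and rperm: "r permutes X" and rder: "\<forall>c\<in>X. r c \<noteq> c"
begin

definition "sh1 c \<longleftrightarrow> Bc c = {c}"
definition "sh2 c \<longleftrightarrow> A c \<noteq> c \<and> Bc c = {c, A c} \<and> {c, A c} \<in> E \<and> branch_E V E c x = {{c, A c}}"
definition "sh3 c \<longleftrightarrow> c \<noteq> A c \<and> c \<noteq> Bv c \<and> A c \<noteq> Bv c \<and> Bc c = {c, A c, Bv c} \<and> {c, A c} \<in> E \<and>
       {A c, Bv c} \<in> E \<and> branch_E V E c x = {{c, A c}, {A c, Bv c}}"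

definition "g c v = (if sh1 c then r c else if sh2 c then (if v = c then A c else r c)
   else (if v = c then Bv c else if v = A c then r c else A c))"

definition "sz v = (if v \<in> V' then \<sigma> v else if (\<exists>c\<in>X. v \<in> Bc c) then g (SOME c. c \<in> X \<and> v \<in> Bc c) v else v)"

lemma shc: "c \<in> X \<Longrightarrow> sh1 c \<or> sh2 c \<or> sh3 c"
  using shp unfolding sh1_def sh2_def sh3_def by blast

lemma sh12: "sh1 c \<Longrightarrow> \<not> sh2 c \<and> \<not> sh3 c"
  unfolding sh1_def sh2_def sh3_def by (auto simp: doubleton_eq_iff)

lemma sh23: "sh2 c \<Longrightarrow> \<not> sh3 c"
  unfolding sh2_def sh3_def by auto

lemma rX: "c \<in> X \<Longrightarrow> r c \<in> X" using permutes_in_image[OF rperm] by simp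

lemma rc_notin: assumes "c \<in> X" "v \<in> Bc c" shows "v \<noteq> r c"
proof
  assume v: "v = r c"
  have rcX: "r c \<in> X" using rX[OF assms(1)] .
  have "v \<in> Bc (r c)" using Bc_self[OF rcX] v by simp
  moreover have "c \<noteq> r c" using rder assms(1) by metis
  ultimately show False using Bc_disj[OF assms(1) rcX _ assms(2)] by blast
qed

lemma sz_branch: assumes "c \<in> X" "v \<in> Bc c" shows "sz v = g c v"
proof -
  have nV: "v \<notin> V'" using Bc_V'_disj[OF assms] by auto
  have "(SOME c'. c' \<in> X \<and> v \<in> Bc c') = c"
  proof (rule some_equality)
    show "c \<in> X \<and> v \<in> Bc c" using assms by simp
    fix c' assume "c' \<in> X \<and> v \<in> Bc c'"
    then show "c' = c" using Bc_disj[of c' c v] assms by auto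
  qed
  moreover have "\<exists>c\<in>X. v \<in> Bc c" using assms by auto
  ultimately show ?thesis using nV by (simp add: sz_def)
qed

lemma sz_V': "v \<in> V' \<Longrightarrow> sz v = \<sigma> v" by (simp add: sz_def)

lemma sz_out: assumes "v \<notin> V" shows "sz v = v"
proof -
  have "v \<notin> V'" using assms V'_sub by blast
  moreover have "\<not> (\<exists>c\<in>X. v \<in> Bc c)" using assms Bc_sub by blast
  ultimately show ?thesis by (simp add: sz_def)
qed

lemma g1: "sh1 c \<Longrightarrow> g c v = r c" by (simp add: g_def)
lemma g2c: "sh2 c \<Longrightarrow> g c c = A c" using sh12 by (auto simp: g_def)
lemma g2a: "sh2 c \<Longrightarrow> g c (A c) = r c" using sh12 by (auto simp: g_def sh2_def)
lemma g3c: "sh3 c \<Longrightarrow> g c c = Bv c" using sh12 sh23 by (auto simp: g_def)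
lemma g3a: "sh3 c \<Longrightarrow> g c (A c) = r c" using sh12 sh23 by (auto simp: g_def sh3_def)
lemma g3b: "sh3 c \<Longrightarrow> g c (Bv c) = A c" using sh12 sh23 by (auto simp: g_def sh3_def)

lemma via_x: assumes "u \<in> V" "w \<in> V" shows "gdist V E u w \<le> gdist V E x u + gdist V E x w"
proof -
  have "gdist V E u w \<le> gdist V E u x + gdist V E x w" using gd_tri[OF cg assms(1) xV assms(2)] .
  moreover have "gdist V E u x = gdist V E x u" using gd_sym[OF cg xV assms(1)] .
  ultimately show ?thesis by simp
qed

lemma dC: assumes "c \<in> X" shows "gdist V E x c \<le> 1"
proof -
  have h: "c \<in> V \<and> {x,c} \<in> E \<and> c \<noteq> x" using XV[OF assms] .
  show ?thesis using gd_edge[of x c E V] h xV by simp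
qed

lemma cV: "c \<in> X \<Longrightarrow> c \<in> V" using XV by simp

lemma AV: assumes "sh2 c \<or> sh3 c" shows "A c \<in> V \<and> {c, A c} \<in> E"
proof -
  have e: "{c, A c} \<in> E" using assms unfolding sh2_def sh3_def by auto
  show ?thesis using sgE[OF e] e by simp
qed

lemma BvV: assumes "sh3 c" shows "Bv c \<in> V \<and> {A c, Bv c} \<in> E"
proof -
  have e: "{A c, Bv c} \<in> E" using assms unfolding sh3_def by auto
  show ?thesis using sgE[OF e] e by simp
qed

lemma dA: assumes "c \<in> X" "sh2 c \<or> sh3 c" shows "gdist V E x (A c) \<le> 2"
proof -
  have a: "A c \<in> V" "{c, A c} \<in> E" using AV[OF assms(2)] by simp_all
  have c: "c \<in> V" using cV[OF assms(1)] .
  have "gdist V E x (A c) \<le> gdist V E x c + gdist V E c (A c)"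
    using gd_tri[OF cg xV c a(1)] .
  moreover have "gdist V E c (A c) \<le> 1" using gd_edge[OF a(2) c a(1)] .
  ultimately show ?thesis using dC[OF assms(1)] by simp
qed

lemma dB: assumes "c \<in> X" "sh3 c" shows "gdist V E x (Bv c) \<le> 3"
proof -
  have a: "A c \<in> V" using AV assms(2) by simp
  have b: "Bv c \<in> V" "{A c, Bv c} \<in> E" using BvV[OF assms(2)] by simp_all
  have "gdist V E x (Bv c) \<le> gdist V E x (A c) + gdist V E (A c) (Bv c)"
    using gd_tri[OF cg xV a b(1)] .
  moreover have "gdist V E (A c) (Bv c) \<le> 1" using gd_edge[OF b(2) a b(1)] .
  moreover have "gdist V E x (A c) \<le> 2" using dA[OF assms(1)] assms(2) by simp
  ultimately show ?thesis by simp
qed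

lemma depth: assumes "c \<in> X" "v \<in> Bc c" shows "gdist V E x v \<le> 3"
proof -
  consider "sh1 c" | "sh2 c" | "sh3 c" using shc assms(1) by blast
  then show ?thesis
  proof cases
    case 1 then have "v = c" using assms(2) by (simp add: sh1_def)
    then show ?thesis using dC[OF assms(1)] by simp
  next
    case 2 then have "v = c \<or> v = A c" using assms(2) by (simp add: sh2_def)
    then show ?thesis using dC[OF assms(1)] dA[OF assms(1)] 2 by auto
  next
    case 3 then have "v = c \<or> v = A c \<or> v = Bv c" using assms(2) by (simp add: sh3_def)
    then show ?thesis using dC[OF assms(1)] dA[OF assms(1)] dB[OF assms(1)] 3 by auto
  qed
qed

lemma G1: assumes "c \<in> X" "v \<in> Bc c" shows "sz v \<in> Bc c \<or> sz v = r c"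
proof -
  have s: "sz v = g c v" using sz_branch assms .
  consider "sh1 c" | "sh2 c" | "sh3 c" using shc assms(1) by blast
  then show ?thesis
  proof cases
    case 1 then show ?thesis using s g1 by simp
  next
    case 2 then have v: "v = c \<or> v = A c" using assms(2) by (simp add: sh2_def)
    have "A c \<in> Bc c" using 2 by (simp add: sh2_def)
    then show ?thesis using v s g2c[OF 2] g2a[OF 2] by auto
  next
    case 3 then have v: "v = c \<or> v = A c \<or> v = Bv c" using assms(2) by (simp add: sh3_def)
    have "A c \<in> Bc c" "Bv c \<in> Bc c" using 3 by (simp_all add: sh3_def)
    then show ?thesis using v s g3c[OF 3] g3a[OF 3] g3b[OF 3] by auto
  qed
qed

lemma G1': assumes "c \<in> X" "v \<in> Bc c"
  shows "\<exists>c'\<in>X. sz v \<in> Bc c'"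
proof -
  have rcX: "r c \<in> X" using rX[OF assms(1)] .
  show ?thesis using G1[OF assms]
  proof
    assume "sz v \<in> Bc c" then show ?thesis using assms(1) by blast
  next
    assume "sz v = r c" then show ?thesis using Bc_self[OF rcX] rcX by auto
  qed
qed

lemma img_V: assumes "c \<in> X" "v \<in> Bc c" shows "sz v \<in> V \<and> sz v \<notin> V' \<and> gdist V E x (sz v) \<le> 3"
proof -
  obtain c' where c': "c' \<in> X" "sz v \<in> Bc c'" using G1'[OF assms] by blast
  have "sz v \<in> V" using c'(2) Bc_sub by blast
  moreover have "sz v \<notin> V'" using Bc_V'_disj[OF c'] by auto
  moreover have "gdist V E x (sz v) \<le> 3" using depth[OF c'] .
  ultimately show ?thesis by simp
qed

lemma G2: assumes "c \<in> X" "v \<in> Bc c" shows "gdist V E v (sz v) \<le> 4 \<and> (v = c \<longrightarrow> gdist V E v (sz v) \<le> 2)"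
proof -
  have s: "sz v = g c v" using sz_branch assms .
  have rcX: "r c \<in> X" using rX[OF assms(1)] .
  have rcV: "r c \<in> V" using cV[OF rcX] .
  have cV: "c \<in> V" using cV[OF assms(1)] .
  have drc: "gdist V E x (r c) \<le> 1" using dC[OF rcX] .
  consider "sh1 c" | "sh2 c" | "sh3 c" using shc assms(1) by blast
  then show ?thesis
  proof cases
    case 1 then have "v = c" using assms(2) by (simp add: sh1_def)
    moreover have "gdist V E c (r c) \<le> 2" using via_x[OF cV rcV] dC[OF assms(1)] drc by simp
    ultimately show ?thesis using s g1[OF 1] by simp
  next
    case 2 then have "v = c \<or> v = A c" using assms(2) by (simp add: sh2_def)
    then show ?thesis
    proof
      assume v: "v = c"
      have a: "A c \<in> V" "{c, A c} \<in> E" using AV 2 by simp_all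
      have "gdist V E c (A c) \<le> 1" using gd_edge[OF a(2) cV a(1)] .
      then show ?thesis using v s g2c[OF 2] by simp
    next
      assume v: "v = A c"
      have a: "A c \<in> V" using AV 2 by simp
      have "gdist V E (A c) (r c) \<le> 3" using via_x[OF a rcV] dA[OF assms(1)] 2 drc by simp
      moreover have "A c \<noteq> c" using 2 by (simp add: sh2_def)
      ultimately show ?thesis using v s g2a[OF 2] by simp
    qed
  next
    case 3 then have "v = c \<or> v = A c \<or> v = Bv c" using assms(2) by (simp add: sh3_def)
    have a: "A c \<in> V" "{c, A c} \<in> E" using AV 3 by simp_all
    have b: "Bv c \<in> V" "{A c, Bv c} \<in> E" using BvV[OF 3] by simp_all
    show ?thesis using \<open>v = c \<or> v = A c \<or> v = Bv c\<close>
    proof (elim disjE)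
      assume v: "v = c"
      have "gdist V E c (Bv c) \<le> gdist V E c (A c) + gdist V E (A c) (Bv c)"
        using gd_tri[OF cg cV a(1) b(1)] .
      moreover have "gdist V E c (A c) \<le> 1" using gd_edge[OF a(2) cV a(1)] .
      moreover have "gdist V E (A c) (Bv c) \<le> 1" using gd_edge[OF b(2) a(1) b(1)] .
      ultimately show ?thesis using v s g3c[OF 3] by simp
    next
      assume v: "v = A c"
      have "gdist V E (A c) (r c) \<le> 3" using via_x[OF a(1) rcV] dA[OF assms(1)] 3 drc by simp
      moreover have "A c \<noteq> c" using 3 by (auto simp: sh3_def)
      ultimately show ?thesis using v s g3a[OF 3] by simp
    next
      assume v: "v = Bv c"
      have e: "{Bv c, A c} \<in> E" using b(2) by (simp add: insert_commute)
      have "gdist V E (Bv c) (A c) \<le> 1" using gd_edge[OF e b(1) a(1)] .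
      moreover have "Bv c \<noteq> c" using 3 by (auto simp: sh3_def)
      ultimately show ?thesis using v s g3b[OF 3] by simp
    qed
  qed
qed

lemma G3: assumes "c \<in> X" "u \<in> Bc c" "w \<in> Bc c" "{u,w} \<in> E"
  shows "(sz u = r c \<and> sz w \<in> Bc c) \<or> (sz w = r c \<and> sz u \<in> Bc c)"
proof -
  have su: "sz u = g c u" using sz_branch[OF assms(1,2)] .
  have sw: "sz w = g c w" using sz_branch[OF assms(1,3)] .
  have BE: "{u,w} \<in> branch_E V E c x" using edge_in_BE[OF assms] .
  consider "sh1 c" | "sh2 c" | "sh3 c" using shc assms(1) by blast
  then show ?thesis
  proof cases
    case 1 then have "u = c" "w = c" using assms(2,3) by (simp_all add: sh1_def)
    then show ?thesis using sgE[OF assms(4)] by simp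
  next
    case 2
    then have "{u,w} = {c, A c}" using BE by (simp add: sh2_def)
    then have uw: "(u = c \<and> w = A c) \<or> (u = A c \<and> w = c)" by (auto simp: doubleton_eq_iff)
    have "A c \<in> Bc c" using 2 by (simp add: sh2_def)
    then show ?thesis using uw su sw g2c[OF 2] g2a[OF 2] by auto
  next
    case 3
    then have "{u,w} = {c, A c} \<or> {u,w} = {A c, Bv c}" using BE by (simp add: sh3_def)
    then have uw: "(u = c \<and> w = A c) \<or> (u = A c \<and> w = c) \<or> (u = A c \<and> w = Bv c) \<or> (u = Bv c \<and> w = A c)"
      by (auto simp: doubleton_eq_iff)
    have "A c \<in> Bc c" "Bv c \<in> Bc c" using 3 by (simp_all add: sh3_def)
    then show ?thesis using uw su sw g3c[OF 3] g3a[OF 3] g3b[OF 3] by auto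
  qed
qed

lemma G4: assumes "c \<in> X" "v \<in> Bc c" shows "sz v \<noteq> v"
proof -
  have s: "sz v = g c v" using sz_branch assms .
  have rc: "v \<noteq> r c" using rc_notin assms .
  consider "sh1 c" | "sh2 c" | "sh3 c" using shc assms(1) by blast
  then show ?thesis
  proof cases
    case 1 then show ?thesis using s g1 rc by simp
  next
    case 2 then have v: "v = c \<or> v = A c" using assms(2) by (simp add: sh2_def)
    have "A c \<noteq> c" using 2 by (simp add: sh2_def)
    then show ?thesis using v s g2c[OF 2] g2a[OF 2] rc by auto
  next
    case 3 then have v: "v = c \<or> v = A c \<or> v = Bv c" using assms(2) by (simp add: sh3_def)
    have "A c \<noteq> c" "Bv c \<noteq> c" "A c \<noteq> Bv c" using 3 by (auto simp: sh3_def)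
    then show ?thesis using v s g3c[OF 3] g3a[OF 3] g3b[OF 3] rc by auto
  qed
qed

lemma G5: assumes "c \<in> X" "w \<in> Bc c" shows "w \<in> sz ` (\<Union>c\<in>X. Bc c)"
proof -
  have "c \<in> r ` X" using permutes_image[OF rperm] assms(1) by simp
  then obtain c0 where c0: "c0 \<in> X" "r c0 = c" by blast
  have c0B: "c0 \<in> Bc c0" using Bc_self[OF c0(1)] .
  have pre: "\<exists>p\<in>Bc c0. sz p = c"
  proof -
    consider "sh1 c0" | "sh2 c0" | "sh3 c0" using shc c0(1) by blast
    then show ?thesis
    proof cases
      case 1
      have "sz c0 = c" using sz_branch[OF c0(1) c0B] g1[OF 1] c0(2) by simp
      then show ?thesis using c0B by blast
    next
      case 2
      have aB: "A c0 \<in> Bc c0" using 2 by (simp add: sh2_def)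
      have "sz (A c0) = c" using sz_branch[OF c0(1) aB] g2a[OF 2] c0(2) by simp
      then show ?thesis using aB by blast
    next
      case 3
      have aB: "A c0 \<in> Bc c0" using 3 by (simp add: sh3_def)
      have "sz (A c0) = c" using sz_branch[OF c0(1) aB] g3a[OF 3] c0(2) by simp
      then show ?thesis using aB by blast
    qed
  qed
  have U: "Bc c0 \<subseteq> (\<Union>c\<in>X. Bc c)" "Bc c \<subseteq> (\<Union>c\<in>X. Bc c)" using c0(1) assms(1) by blast+
  have cB: "c \<in> Bc c" using Bc_self[OF assms(1)] .
  have cim: "c \<in> sz ` (\<Union>c\<in>X. Bc c)" using pre U(1) by blast
  consider "sh1 c" | "sh2 c" | "sh3 c" using shc assms(1) by blast
  then show ?thesis
  proof cases
    case 1 then have "w = c" using assms(2) by (simp add: sh1_def)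
    then show ?thesis using cim by simp
  next
    case 2 then have w: "w = c \<or> w = A c" using assms(2) by (simp add: sh2_def)
    have "sz c = A c" using sz_branch[OF assms(1) cB] g2c[OF 2] by simp
    then have "A c \<in> sz ` (\<Union>c\<in>X. Bc c)" using cB U(2) by (metis imageI subsetD)
    then show ?thesis using w cim by blast
  next
    case 3 then have w: "w = c \<or> w = A c \<or> w = Bv c" using assms(2) by (simp add: sh3_def)
    have bB: "Bv c \<in> Bc c" using 3 by (simp add: sh3_def)
    have "sz c = Bv c" using sz_branch[OF assms(1) cB] g3c[OF 3] by simp
    then have 1: "Bv c \<in> sz ` (\<Union>c\<in>X. Bc c)" using cB U(2) by (metis imageI subsetD)
    have "sz (Bv c) = A c" using sz_branch[OF assms(1) bB] g3b[OF 3] by simp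
    then have 2: "A c \<in> sz ` (\<Union>c\<in>X. Bc c)" using bB U(2) by (metis imageI subsetD)
    show ?thesis using w cim 1 2 by blast
  qed
qed

end



context S2 begin

lemma sigV': "v \<in> V' \<Longrightarrow> \<sigma> v \<in> V'" using permutes_in_image[of \<sigma> V' v] gp' by simp

lemma P_perm: "sz permutes V"
proof -
  have into: "sz v \<in> V" if vV: "v \<in> V" for v
  proof -
    consider "v \<in> V'" | c where "c \<in> X" "v \<in> Bc c" using cover[OF vV] by blast
    then show ?thesis
    proof cases
      case 1 then show ?thesis using sigV' sz_V' V'_sub by auto
    next
      case 2 then show ?thesis using img_V by blast
    qed
  qed
  have surj: "V \<subseteq> sz ` V"
  proof
    fix v assume v: "v \<in> V"
    consider "v \<in> V'" | c where "c \<in> X" "v \<in> Bc c" using cover[OF v] by blast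
    then show "v \<in> sz ` V"
    proof cases
      case 1
      have "\<sigma> ` V' = V'" using permutes_image gp' by blast
      then obtain u where u: "u \<in> V'" "\<sigma> u = v" using 1 by force
      then have "sz u = v" using sz_V' by simp
      moreover have "u \<in> V" using u(1) V'_sub by blast
      ultimately show ?thesis by blast
    next
      case 2
      have "v \<in> sz ` (\<Union>c\<in>X. Bc c)" using G5[OF 2] .
      moreover have "(\<Union>c\<in>X. Bc c) \<subseteq> V" using Bc_sub by blast
      ultimately show ?thesis by blast
    qed
  qed
  have inj: "inj_on sz V" using finite_surj_inj[OF finV surj] .
  have "sz ` V = V" using into surj by blast
  then have "bij_betw sz V V" using inj by (simp add: bij_betw_def)
  then show ?thesis using bij_imp_permutes sz_out by blast
qed

lemma P_fp: "v \<in> V \<Longrightarrow> sz v \<noteq> v"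
proof -
  assume v: "v \<in> V"
  consider "v \<in> V'" | c where "c \<in> X" "v \<in> Bc c" using cover[OF v] by blast
  then show ?thesis
  proof cases
    case 1 then show ?thesis using gp' sz_V' by simp
  next
    case 2 then show ?thesis using G4 by blast
  qed
qed

lemma edge_cases: assumes "{a,b} \<in> E"
  shows "(a \<in> V' \<and> b \<in> V') \<or> (\<exists>c\<in>X. a = x \<and> b = c) \<or> (\<exists>c\<in>X. b = x \<and> a = c) \<or>
         (\<exists>c\<in>X. a \<in> Bc c \<and> b \<in> Bc c)"
proof -
  have aV: "a \<in> V" and bV: "b \<in> V" using sgE[OF assms] by simp_all
  consider "a \<in> V'" | c where "c \<in> X" "a \<in> Bc c" using cover[OF aV] by blast
  then show ?thesis
  proof cases
    case 1
    consider "b \<in> V'" | c where "c \<in> X" "b \<in> Bc c" using cover[OF bV] by blast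
    then show ?thesis
    proof cases
      case 1 then show ?thesis using \<open>a \<in> V'\<close> by simp
    next
      case 2
      have e: "{b,a} \<in> E" using assms by (simp add: insert_commute)
      from edge_Bc[OF 2 e] show ?thesis
      proof
        assume "a \<in> Bc c \<and> {b, a} \<noteq> {c, x}" then show ?thesis using Bc_V'_disj[OF 2(1)] 1 by blast
      next
        assume "b = c \<and> a = x" then show ?thesis using 2(1) by blast
      qed
    qed
  next
    case 2
    from edge_Bc[OF 2 assms] show ?thesis
    proof
      assume "b \<in> Bc c \<and> {a, b} \<noteq> {c, x}" then show ?thesis using 2 by blast
    next
      assume "a = c \<and> b = x" then show ?thesis using 2(1) by blast
    qed
  qed
qed

lemma sx_fp: "\<sigma> x \<noteq> x" using gp' x_V' by blast

lemma xc_nonadj: assumes "c \<in> X" shows "{\<sigma> x, sz c} \<notin> E"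
proof
  assume e0: "{\<sigma> x, sz c} \<in> E"
  then have e: "{sz c, \<sigma> x} \<in> E" by (simp add: insert_commute)
  obtain c' where c': "c' \<in> X" "sz c \<in> Bc c'" using G1'[OF assms Bc_self[OF assms]] by blast
  have sxV: "\<sigma> x \<in> V'" using sigV' x_V' by blast
  from edge_Bc[OF c' e] show False
  proof
    assume "\<sigma> x \<in> Bc c' \<and> {sz c, \<sigma> x} \<noteq> {c', x}" then show False using Bc_V'_disj[OF c'(1)] sxV by blast
  next
    assume "sz c = c' \<and> \<sigma> x = x" then show False using sx_fp by simp
  qed
qed

lemma br_nonadj: assumes "c \<in> X" "u \<in> Bc c" "w \<in> Bc c" "{u,w} \<in> E" shows "{sz u, sz w} \<notin> E"
proof -
  have rcX: "r c \<in> X" using rX[OF assms(1)] .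
  have ne: "c \<noteq> r c" using rder assms(1) by metis
  have rB: "r c \<in> Bc (r c)" using Bc_self[OF rcX] .
  from G3[OF assms] show ?thesis
  proof
    assume h: "sz u = r c \<and> sz w \<in> Bc c"
    have "{sz w, r c} \<notin> E" using no_cross[OF assms(1) rcX ne _ rB] h by blast
    then show ?thesis using h by (simp add: insert_commute)
  next
    assume h: "sz w = r c \<and> sz u \<in> Bc c"
    have "{sz u, r c} \<notin> E" using no_cross[OF assms(1) rcX ne _ rB] h by blast
    then show ?thesis using h by simp
  qed
qed

lemma P_nonadj: assumes "{a,b} \<in> E" shows "{sz a, sz b} \<notin> E"
proof -
  consider "a \<in> V' \<and> b \<in> V'" | "\<exists>c\<in>X. a = x \<and> b = c" | "\<exists>c\<in>X. b = x \<and> a = c" |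
    "\<exists>c\<in>X. a \<in> Bc c \<and> b \<in> Bc c" using edge_cases[OF assms] by blast
  then show ?thesis
  proof cases
    case 1
    have e': "{a,b} \<in> E'" using E'_edge 1 assms by blast
    have "{\<sigma> a, \<sigma> b} \<notin> E'" using gp' e' unfolding two_placement_def by blast
    moreover have "\<sigma> a \<in> V'" "\<sigma> b \<in> V'" using sigV' 1 by blast+
    ultimately have "{\<sigma> a, \<sigma> b} \<notin> E" using E'_edge by blast
    then show ?thesis using 1 sz_V' by simp
  next
    case 2
    then obtain c where c: "c \<in> X" "a = x" "b = c" by blast
    then show ?thesis using xc_nonadj[OF c(1)] sz_V'[OF x_V'] by simp
  next
    case 3
    then obtain c where c: "c \<in> X" "b = x" "a = c" by blast
    then show ?thesis using xc_nonadj[OF c(1)] sz_V'[OF x_V'] by (simp add: insert_commute)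
  next
    case 4
    then obtain c where c: "c \<in> X" "a \<in> Bc c" "b \<in> Bc c" by blast
    show ?thesis using br_nonadj[OF c assms] .
  qed
qed

lemma dsx: "gdist V E x (\<sigma> x) \<le> 2"
  using gmono[OF x_V' sigV'[OF x_V']] sx by simp

lemma P_d5: assumes "{a,b} \<in> E" shows "gdist V E (sz a) (sz b) \<le> 5"
proof -
  have sxV: "\<sigma> x \<in> V" using sigV'[OF x_V'] V'_sub by blast
  consider "a \<in> V' \<and> b \<in> V'" | "\<exists>c\<in>X. a = x \<and> b = c" | "\<exists>c\<in>X. b = x \<and> a = c" |
    "\<exists>c\<in>X. a \<in> Bc c \<and> b \<in> Bc c" using edge_cases[OF assms] by blast
  then show ?thesis
  proof cases
    case 1
    have e': "{a,b} \<in> E'" using E'_edge 1 assms by blast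
    have "gdist V' E' (\<sigma> a) (\<sigma> b) \<le> 5" using gp' e' by blast
    moreover have "\<sigma> a \<in> V'" "\<sigma> b \<in> V'" using sigV' 1 by blast+
    ultimately have "gdist V E (\<sigma> a) (\<sigma> b) \<le> 5" using gmono by (meson le_trans)
    then show ?thesis using 1 sz_V' by simp
  next
    case 2
    then obtain c where c: "c \<in> X" "a = x" "b = c" by blast
    have i: "sz c \<in> V" "gdist V E x (sz c) \<le> 3" using img_V[OF c(1) Bc_self[OF c(1)]] by simp_all
    have "gdist V E (\<sigma> x) (sz c) \<le> 5" using via_x[OF sxV i(1)] dsx i(2) by simp
    then show ?thesis using c sz_V'[OF x_V'] by simp
  next
    case 3
    then obtain c where c: "c \<in> X" "b = x" "a = c" by blast
    have i: "sz c \<in> V" "gdist V E x (sz c) \<le> 3" using img_V[OF c(1) Bc_self[OF c(1)]] by simp_all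
    have "gdist V E (sz c) (\<sigma> x) \<le> 5" using via_x[OF i(1) sxV] dsx i(2) by simp
    then show ?thesis using c sz_V'[OF x_V'] by simp
  next
    case 4
    then obtain c where c: "c \<in> X" "a \<in> Bc c" "b \<in> Bc c" by blast
    have rcX: "r c \<in> X" using rX[OF c(1)] .
    have rcV: "r c \<in> V" using cV[OF rcX] .
    have dr: "gdist V E x (r c) \<le> 1" using dC[OF rcX] .
    have ia: "sz a \<in> V" "gdist V E x (sz a) \<le> 3" using img_V[OF c(1,2)] by simp_all
    have ib: "sz b \<in> V" "gdist V E x (sz b) \<le> 3" using img_V[OF c(1,3)] by simp_all
    have "gdist V E (sz a) (sz b) \<le> gdist V E x (sz a) + gdist V E x (sz b)" using via_x[OF ia(1) ib(1)] .
    moreover have "sz a = r c \<or> sz b = r c" using G3[OF c assms] by blast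
    ultimately show ?thesis using dr ia(2) ib(2) by auto
  qed
qed

lemma P_z: "gdist V E z (sz z) = 1"
proof -
  have szz: "sz z = \<sigma> z" using sz_V'[OF zV'] .
  have szV: "\<sigma> z \<in> V'" using sigV'[OF zV'] .
  have "gdist V E z (\<sigma> z) \<le> 1" using gmono[OF zV' szV] gp' by simp
  moreover have "gdist V E z (\<sigma> z) \<noteq> 0"
  proof
    assume h: "gdist V E z (\<sigma> z) = 0"
    obtain ws where ws: "is_walk V E ws" "hd ws = z" "last ws = \<sigma> z"
      using conn_walk[OF cg] zV' szV V'_sub by blast
    have "z = \<sigma> z" using gd_zero[OF ws h] .
    then show False using gp' zV' by metis
  qed
  ultimately show ?thesis using szz by simp
qed

lemma P_nb: assumes "y \<in> V" "{z,y} \<in> E" shows "gdist V E y (sz y) \<le> 2"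
proof -
  consider "y \<in> V'" | c where "c \<in> X" "y \<in> Bc c" using cover[OF assms(1)] by blast
  then show ?thesis
  proof cases
    case 1
    have e': "{z,y} \<in> E'" using E'_edge[OF zV' 1 assms(2)] .
    have "gdist V' E' y (\<sigma> y) \<le> 2" using gp' e' 1 by blast
    moreover have "gdist V E y (\<sigma> y) \<le> gdist V' E' y (\<sigma> y)" using gmono[OF 1 sigV'[OF 1]] .
    ultimately show ?thesis using sz_V'[OF 1] by simp
  next
    case 2
    have e: "{y,z} \<in> E" using assms(2) by (simp add: insert_commute)
    from edge_Bc[OF 2 e] show ?thesis
    proof
      assume "z \<in> Bc c \<and> {y, z} \<noteq> {c, x}" then show ?thesis using Bc_V'_disj[OF 2(1)] zV' by blast
    next
      assume "y = c \<and> z = x" then show ?thesis using G2[OF 2] by simp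
    qed
  qed
qed

lemma P_leaf: assumes "y \<in> V" "degree V E y = 1" shows "gdist V E y (sz y) \<le> 4"
proof -
  consider "y \<in> V'" | c where "c \<in> X" "y \<in> Bc c" using cover[OF assms(1)] by blast
  then show ?thesis
  proof cases
    case 1
    have "y \<noteq> x" using assms(2) deg by (auto simp: degree_def)
    then have "degree V' E' y = 1" using deg_eq[OF 1] assms(2) by (simp add: degree_def)
    then have "gdist V' E' y (\<sigma> y) \<le> 4" using gp' 1 by blast
    moreover have "gdist V E y (\<sigma> y) \<le> gdist V' E' y (\<sigma> y)" using gmono[OF 1 sigV'[OF 1]] .
    ultimately show ?thesis using sz_V'[OF 1] by simp
  next
    case 2 then show ?thesis using G2 by blast
  qed
qed

lemma main: "good_placement V E z sz \<and> (\<forall>v\<in>V'. sz v = \<sigma> v) \<and> (\<forall>xi\<in>X. gdist V E xi (sz xi) \<le> 2)"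
proof -
  have zV: "z \<in> V" using zV' V'_sub by blast
  have tp: "two_placement V E sz" unfolding two_placement_def using P_perm P_nonadj by blast
  have g: "good_placement V E z sz"
    unfolding good_placement_def using ns zV P_perm P_fp tp P_d5 P_z P_nb P_leaf by blast
  have X2: "\<forall>xi\<in>X. gdist V E xi (sz xi) \<le> 2" using G2 Bc_self by blast
  show ?thesis using g X2 sz_V' by blast
qed

end



theorem corollary3p1:
  fixes V :: "'a set" and E :: "'a set set" and x z :: 'a and X :: "'a set"
    and \<sigma> :: "'a \<Rightarrow> 'a"
  assumes "non_star_tree V E"
    and "x \<in> V"
    and "card {y \<in> V. {x, y} \<in> E} > 2"
    and "X \<subseteq> {y \<in> V. {x, y} \<in> E}"
    and "2 \<le> card X" and "card X < card {y \<in> V. {x, y} \<in> E}"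
    and "\<forall>xi\<in>X. nbr_F_tree V E xi x"
    and "V' = comp V (E - {{x, xi} | xi. xi \<in> X}) x"
    and "E' = induced (E - {{x, xi} | xi. xi \<in> X}) V'"
    and "z \<in> V'"
    and "good_placement V' E' z \<sigma>"
    and "gdist V' E' x (\<sigma> x) \<le> 2"
  shows "\<exists>\<sigma>z. good_placement V E z \<sigma>z \<and> (\<forall>v\<in>V'. \<sigma>z v = \<sigma> v) \<and>
           (\<forall>xi\<in>X. gdist V E xi (\<sigma>z xi) \<le> 2)"
proof -
  have S: "S V E x z X V' E' \<sigma>" by (rule S.intro[OF assms(1-5) assms(7-12)])
  define P where "P c p \<longleftrightarrow> branch_V V E c x = {c} \<or>
    (fst p \<noteq> c \<and> branch_V V E c x = {c, fst p} \<and> {c, fst p} \<in> E \<and> branch_E V E c x = {{c, fst p}}) \<or>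
    (c \<noteq> fst p \<and> c \<noteq> snd p \<and> fst p \<noteq> snd p \<and> branch_V V E c x = {c, fst p, snd p} \<and> {c, fst p} \<in> E \<and>
       {fst p, snd p} \<in> E \<and> branch_E V E c x = {{c, fst p}, {fst p, snd p}})" for c p
  have "\<forall>c\<in>X. \<exists>p. P c p" unfolding P_def using S.shape[OF S] by blast
  then obtain f where f: "\<forall>c\<in>X. P c (f c)" using bchoice by blast
  obtain r where r: "r permutes X" "\<forall>c\<in>X. r c \<noteq> c" using derangement_ex[OF S.finX[OF S] assms(5)] by blast
  have ax: "S2_axioms V E x X (\<lambda>c. fst (f c)) (\<lambda>c. snd (f c)) r"
  proof (rule S2_axioms.intro)
    show "r permutes X" by (rule r(1))
    show "\<forall>c\<in>X. r c \<noteq> c" by (rule r(2))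
    show "\<forall>c\<in>X. branch_V V E c x = {c} \<or>
    (fst (f c) \<noteq> c \<and> branch_V V E c x = {c, fst (f c)} \<and> {c, fst (f c)} \<in> E \<and> branch_E V E c x = {{c, fst (f c)}}) \<or>
    (c \<noteq> fst (f c) \<and> c \<noteq> snd (f c) \<and> fst (f c) \<noteq> snd (f c) \<and> branch_V V E c x = {c, fst (f c), snd (f c)} \<and> {c, fst (f c)} \<in> E \<and>
       {fst (f c), snd (f c)} \<in> E \<and> branch_E V E c x = {{c, fst (f c)}, {fst (f c), snd (f c)}})"
      using f unfolding P_def by blast
  qed
  have S2: "S2 V E x z X V' E' \<sigma> (\<lambda>c. fst (f c)) (\<lambda>c. snd (f c)) r"
    by (rule S2.intro[OF S ax])
  show ?thesis using S2.main[OF S2] by blast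
qed


end
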